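(* Let $s,t_0\ge 2$ be integers. Then for all integers $t\ge t_0$, $$g_{s,t}\le\left(t - t_0 + g_{s,t_0}^{1/(1-s)}\right)^{1-s}.$$ In particular, if $g_{s,t_0} < (t_0-1)^{1-s}$, then $g_{s,t} < (t-1)^{1-s}$ for all $t\ge t_0$.
   Context: For a graph $G$, $k_t(G)$ is the number of cliques on $t$ vertices in $G$ and $\overline{G}$ is the complement. Let $k'_{s,t}(n) = \min\{k_s(\overline{G}) : |V(G)| = n,\ k_t(G) = 0\}$, the minimum number of independent sets of size $s$ in an $n$-vertex graph with no clique of size $t$, and $g_{s,t} = \lim_{n\to\infty}k'_{s,t}(n)/\binom{n}{s}$ (this limit exists and is positive for $s,t\ge 2$). *)

theory Defs
  imports Complex_Main
begin

definition graphs :: "nat \<Rightarrow> nat set set set" where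
  "graphs n = {E. E \<subseteq> {e. e \<subseteq> {0..<n} \<and> card e = 2}}"

definition k_clique :: "nat \<Rightarrow> nat set set \<Rightarrow> nat \<Rightarrow> nat" where
  "k_clique n E t = card {S. S \<subseteq> {0..<n} \<and> card S = t \<and>
      (\<forall>x\<in>S. \<forall>y\<in>S. x \<noteq> y \<longrightarrow> {x, y} \<in> E)}"

definition k_indep :: "nat \<Rightarrow> nat set set \<Rightarrow> nat \<Rightarrow> nat" where
  "k_indep n E s = card {S. S \<subseteq> {0..<n} \<and> card S = s \<and>
      (\<forall>x\<in>S. \<forall>y\<in>S. x \<noteq> y \<longrightarrow> {x, y} \<notin> E)}"

definition kprime :: "nat \<Rightarrow> nat \<Rightarrow> nat \<Rightarrow> nat" where
  "kprime s t n = Min {k_indep n E s | E. E \<in> graphs n \<and> k_clique n E t = 0}"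

definition g :: "nat \<Rightarrow> nat \<Rightarrow> real" where
  "g s t = lim (\<lambda>n. real (kprime s t n) / real (n choose s))"

end

theory Submission
  imports Defs
begin


definition indeps :: "nat \<Rightarrow> nat set set \<Rightarrow> nat \<Rightarrow> nat set set" where
  "indeps n E s = {S. S \<subseteq> {0..<n} \<and> card S = s \<and> (\<forall>x\<in>S. \<forall>y\<in>S. x \<noteq> y \<longrightarrow> {x, y} \<notin> E)}"

lemma k_indep_eq: "k_indep n E s = card (indeps n E s)"
  by (simp add: k_indep_def indeps_def)

lemma finite_indeps: "finite (indeps n E s)"
  unfolding indeps_def by (rule finite_subset[of _ "Pow {0..<n}"]) auto

lemma k_indep_le: "k_indep n E s \<le> n choose s"
proof -
  have "k_indep n E s \<le> card {S. S \<subseteq> {0..<n} \<and> card S = s}"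
    unfolding k_indep_def by (rule card_mono) auto
  also have "\<dots> = n choose s" by (simp add: n_subsets)
  finally show ?thesis .
qed

lemma two_elems: assumes "card S \<ge> 2" obtains x y where "x \<in> S" "y \<in> S" "x \<noteq> y"
proof -
  have "finite S" using assms card.infinite by force
  obtain x where x: "x \<in> S" using assms by fastforce
  have "card (S - {x}) \<ge> 1" using assms x \<open>finite S\<close> by simp
  then have "S - {x} \<noteq> {}" by (metis card.empty not_one_le_zero)
  then obtain y where "y \<in> S - {x}" by blast
  then show ?thesis using x that by blast
qed

lemma empty_clique_free: "t \<ge> 2 \<Longrightarrow> k_clique n {} t = 0"
  unfolding k_clique_def
proof -
  assume t: "t \<ge> 2"
  have "{S. S \<subseteq> {0..<n} \<and> card S = t \<and> (\<forall>x\<in>S. \<forall>y\<in>S. x \<noteq> y \<longrightarrow> {x, y} \<in> {})} = {}"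
  proof (rule ccontr)
    assume "{S. S \<subseteq> {0..<n} \<and> card S = t \<and> (\<forall>x\<in>S. \<forall>y\<in>S. x \<noteq> y \<longrightarrow> {x, y} \<in> {})} \<noteq> {}"
    then obtain S where S: "card S = t" "\<forall>x\<in>S. \<forall>y\<in>S. x \<noteq> y \<longrightarrow> {x, y} \<in> ({}::nat set set)" by blast
    obtain x y where "x \<in> S" "y \<in> S" "x \<noteq> y" using two_elems[of S] S(1) t by auto
    then show False using S(2) by blast
  qed
  then show "card {S. S \<subseteq> {0..<n} \<and> card S = t \<and> (\<forall>x\<in>S. \<forall>y\<in>S. x \<noteq> y \<longrightarrow> {x, y} \<in> {})} = 0" by simp
qed

lemma kprime_props:
  assumes "t \<ge> 2"
  shows "\<exists>E\<in>graphs n. k_clique n E t = 0 \<and> kprime s t n = k_indep n E s"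
    and "E \<in> graphs n \<Longrightarrow> k_clique n E t = 0 \<Longrightarrow> kprime s t n \<le> k_indep n E s"
proof -
  let ?A = "{E \<in> graphs n. k_clique n E t = 0}"
  have eq: "{k_indep n E s | E. E \<in> graphs n \<and> k_clique n E t = 0} = (\<lambda>E. k_indep n E s) ` ?A" by blast
  have "finite {e. e \<subseteq> {0..<n} \<and> card e = 2}"
    by (rule finite_subset[of _ "Pow {0..<n}"]) auto
  moreover have "graphs n = Pow {e. e \<subseteq> {0..<n} \<and> card e = 2}" unfolding graphs_def by auto
  ultimately have "finite (graphs n)" by simp
  then have fin: "finite ((\<lambda>E. k_indep n E s) ` ?A)" by simp
  have "{} \<in> ?A" using empty_clique_free[OF assms] by (simp add: graphs_def)
  then have ne: "(\<lambda>E. k_indep n E s) ` ?A \<noteq> {}" by blast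
  have "kprime s t n \<in> (\<lambda>E. k_indep n E s) ` ?A"
    unfolding kprime_def eq using Min_in[OF fin ne] .
  then show "\<exists>E\<in>graphs n. k_clique n E t = 0 \<and> kprime s t n = k_indep n E s" by auto
  assume "E \<in> graphs n" "k_clique n E t = 0"
  then show "kprime s t n \<le> k_indep n E s" unfolding kprime_def eq
    by (intro Min_le[OF fin]) auto
qed

lemma kprime_le: "t \<ge> 2 \<Longrightarrow> kprime s t n \<le> n choose s"
  using kprime_props(1)[of t n s] k_indep_le by fastforce


definition pullback :: "(nat \<Rightarrow> nat) \<Rightarrow> nat \<Rightarrow> nat set set \<Rightarrow> nat set set" where
  "pullback f n E = {e. e \<subseteq> {0..<n} \<and> card e = 2 \<and> f ` e \<in> E}"

lemma pullback_graph: "pullback f n E \<in> graphs n"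
  by (auto simp: pullback_def graphs_def)

lemma pullback_edge:
  assumes "inj_on f {0..<n}" "x < n" "y < n" "x \<noteq> y"
  shows "{x, y} \<in> pullback f n E \<longleftrightarrow> {f x, f y} \<in> E"
proof -
  have "card {x, y} = 2" using assms by simp
  then show ?thesis using assms by (simp add: pullback_def)
qed

lemma pullback_clique:
  assumes inj: "inj_on f {0..<n}" and img: "f ` {0..<n} \<subseteq> {0..<N}"
  shows "k_clique n (pullback f n E) t \<le> k_clique N E t"
proof -
  let ?C1 = "{S. S \<subseteq> {0..<n} \<and> card S = t \<and> (\<forall>x\<in>S. \<forall>y\<in>S. x \<noteq> y \<longrightarrow> {x, y} \<in> pullback f n E)}"
  let ?C2 = "{S. S \<subseteq> {0..<N} \<and> card S = t \<and> (\<forall>x\<in>S. \<forall>y\<in>S. x \<noteq> y \<longrightarrow> {x, y} \<in> E)}"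
  have fin: "finite ?C2" by (rule finite_subset[of _ "Pow {0..<N}"]) auto
  have injP: "inj_on (image f) ?C1"
    by (rule inj_on_subset[OF inj_on_image_Pow[OF inj]]) auto
  have "image f ` ?C1 \<subseteq> ?C2"
  proof
    fix T assume "T \<in> image f ` ?C1"
    then obtain S where S: "S \<in> ?C1" and T: "T = f ` S" by blast
    have sub: "S \<subseteq> {0..<n}" using S by auto
    have injS: "inj_on f S" using inj_on_subset[OF inj sub] .
    have "card T = t" using S T card_image[OF injS] by auto
    moreover have "T \<subseteq> {0..<N}" using T sub img by auto
    moreover have "\<forall>x\<in>T. \<forall>y\<in>T. x \<noteq> y \<longrightarrow> {x, y} \<in> E"
    proof (intro ballI impI)
      fix x' y' assume "x' \<in> T" "y' \<in> T" "x' \<noteq> y'"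
      then obtain x y where xy: "x \<in> S" "y \<in> S" "x' = f x" "y' = f y" using T by blast
      then have "x \<noteq> y" using \<open>x' \<noteq> y'\<close> by auto
      then have "{x, y} \<in> pullback f n E" using S xy by auto
      moreover have "x < n" "y < n" using sub xy by auto
      ultimately show "{x', y'} \<in> E" using pullback_edge[OF inj \<open>x < n\<close> \<open>y < n\<close> \<open>x \<noteq> y\<close>] xy by auto
    qed
    ultimately show "T \<in> ?C2" by blast
  qed
  then have "card ?C1 \<le> card ?C2"
    using card_inj_on_le[OF injP _ fin] by blast
  then show ?thesis unfolding k_clique_def .
qed

lemma pullback_indep:
  assumes inj: "inj_on f {0..<n}" and img: "f ` {0..<n} \<subseteq> {0..<N}"
  shows "k_indep n (pullback f n E) s = card {T \<in> indeps N E s. T \<subseteq> f ` {0..<n}}"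
proof -
  let ?C1 = "indeps n (pullback f n E) s"
  have injP: "inj_on (image f) ?C1"
    by (rule inj_on_subset[OF inj_on_image_Pow[OF inj]]) (auto simp: indeps_def)
  have "image f ` ?C1 = {T \<in> indeps N E s. T \<subseteq> f ` {0..<n}}"
  proof
    show "image f ` ?C1 \<subseteq> {T \<in> indeps N E s. T \<subseteq> f ` {0..<n}}"
    proof
      fix T assume "T \<in> image f ` ?C1"
      then obtain S where S: "S \<in> ?C1" and T: "T = f ` S" by blast
      have sub: "S \<subseteq> {0..<n}" using S by (auto simp: indeps_def)
      have injS: "inj_on f S" using inj_on_subset[OF inj sub] .
      have "card T = s" using S T card_image[OF injS] by (auto simp: indeps_def)
      moreover have "T \<subseteq> {0..<N}" using T sub img by auto
      moreover have "\<forall>x\<in>T. \<forall>y\<in>T. x \<noteq> y \<longrightarrow> {x, y} \<notin> E"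
      proof (intro ballI impI)
        fix x' y' assume "x' \<in> T" "y' \<in> T" "x' \<noteq> y'"
        then obtain x y where xy: "x \<in> S" "y \<in> S" "x' = f x" "y' = f y" using T by blast
        then have "x \<noteq> y" using \<open>x' \<noteq> y'\<close> by auto
        then have "{x, y} \<notin> pullback f n E" using S xy by (auto simp: indeps_def)
        moreover have "x < n" "y < n" using sub xy by auto
        ultimately show "{x', y'} \<notin> E" using pullback_edge[OF inj \<open>x < n\<close> \<open>y < n\<close> \<open>x \<noteq> y\<close>] xy by auto
      qed
      ultimately show "T \<in> {T \<in> indeps N E s. T \<subseteq> f ` {0..<n}}" using T sub by (auto simp: indeps_def)
    qed
  next
    show "{T \<in> indeps N E s. T \<subseteq> f ` {0..<n}} \<subseteq> image f ` ?C1"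
    proof
      fix T assume T: "T \<in> {T \<in> indeps N E s. T \<subseteq> f ` {0..<n}}"
      define S where "S = {x \<in> {0..<n}. f x \<in> T}"
      have fS: "f ` S = T" using T unfolding S_def by auto
      have sub: "S \<subseteq> {0..<n}" unfolding S_def by auto
      have injS: "inj_on f S" using inj_on_subset[OF inj sub] .
      have "card S = s" using T fS card_image[OF injS] by (auto simp: indeps_def)
      moreover have "\<forall>x\<in>S. \<forall>y\<in>S. x \<noteq> y \<longrightarrow> {x, y} \<notin> pullback f n E"
      proof (intro ballI impI)
        fix x y assume xy: "x \<in> S" "y \<in> S" "x \<noteq> y"
        then have "f x \<noteq> f y" using injS by (auto dest: inj_onD)
        moreover have "f x \<in> T" "f y \<in> T" using xy unfolding S_def by auto
        ultimately have "{f x, f y} \<notin> E" using T by (auto simp: indeps_def)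
        moreover have "x < n" "y < n" using sub xy by auto
        ultimately show "{x, y} \<notin> pullback f n E" using pullback_edge[OF inj \<open>x < n\<close> \<open>y < n\<close> \<open>x \<noteq> y\<close>] by auto
      qed
      ultimately have "S \<in> ?C1" using sub by (auto simp: indeps_def)
      then show "T \<in> image f ` ?C1" using fS by blast
    qed
  qed
  then have "card ?C1 = card {T \<in> indeps N E s. T \<subseteq> f ` {0..<n}}"
    using card_image[OF injP] by metis
  then show ?thesis by (simp add: k_indep_eq)
qed

definition skip :: "nat \<Rightarrow> nat \<Rightarrow> nat" where
  "skip v i = (if i < v then i else Suc i)"

lemma skip_inj: "inj_on (skip v) A"
  by (auto simp: inj_on_def skip_def split: if_splits)

lemma skip_image: "v \<le> n \<Longrightarrow> skip v ` {0..<n} = {0..<Suc n} - {v}"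
proof (intro equalityI subsetI)
  fix x assume a: "v \<le> n" "x \<in> {0..<Suc n} - {v}"
  show "x \<in> skip v ` {0..<n}"
  proof (cases "x < v")
    case True
    then have "skip v x = x" "x \<in> {0..<n}" using a by (auto simp: skip_def)
    then show ?thesis by (metis imageI)
  next
    case False
    then have "skip v (x - 1) = x" "x - 1 \<in> {0..<n}" using a by (auto simp: skip_def)
    then show ?thesis by (metis imageI)
  qed
qed (auto simp: skip_def)


lemma double_count:
  assumes fin: "finite V" and I: "\<And>T. T \<in> I \<Longrightarrow> T \<subseteq> V \<and> card T = s" and finI: "finite I"
  shows "(\<Sum>v\<in>V. card {T \<in> I. v \<notin> T}) = card I * (card V - s)"
proof -
  have "(\<Sum>v\<in>V. card {T \<in> I. v \<notin> T}) = (\<Sum>v\<in>V. \<Sum>T\<in>I. if v \<notin> T then 1 else 0)"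
    by (intro sum.cong refl) (simp add: sum.inter_filter[OF finI, symmetric])
  also have "\<dots> = (\<Sum>T\<in>I. \<Sum>v\<in>V. if v \<notin> T then 1 else 0)" by (rule sum.swap)
  also have "\<dots> = (\<Sum>T\<in>I. card V - s)"
  proof (intro sum.cong refl)
    fix T assume "T \<in> I"
    then have T: "T \<subseteq> V" "card T = s" using I by auto
    have "(\<Sum>v\<in>V. if v \<notin> T then 1 else 0) = card {v \<in> V. v \<notin> T}"
      by (simp add: sum.inter_filter[OF fin, symmetric])
    also have "{v \<in> V. v \<notin> T} = V - T" by auto
    also have "card (V - T) = card V - s" using T fin by (simp add: card_Diff_subset finite_subset)
    finally show "(\<Sum>v\<in>V. if v \<notin> T then 1 else 0) = card V - s" .
  qed
  also have "\<dots> = card I * (card V - s)" by simp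
  finally show ?thesis .
qed

lemma kprime_mono_n:
  assumes t: "t \<ge> 2"
  shows "kprime s t n * (Suc n choose s) \<le> kprime s t (Suc n) * (n choose s)"
proof -
  obtain E where E: "E \<in> graphs (Suc n)" "k_clique (Suc n) E t = 0" "kprime s t (Suc n) = k_indep (Suc n) E s"
    using kprime_props(1)[OF t] by blast
  let ?I = "indeps (Suc n) E s"
  let ?V = "{0..<Suc n}"
  have each: "kprime s t n \<le> card {T \<in> ?I. v \<notin> T}" if v: "v \<in> ?V" for v
  proof -
    have inj: "inj_on (skip v) {0..<n}" by (rule skip_inj)
    have im: "skip v ` {0..<n} = ?V - {v}" using v by (intro skip_image) auto
    then have img: "skip v ` {0..<n} \<subseteq> ?V" by auto
    have "k_clique n (pullback (skip v) n E) t \<le> k_clique (Suc n) E t"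
      by (rule pullback_clique[OF inj img])
    then have cf: "k_clique n (pullback (skip v) n E) t = 0" using E by simp
    have "kprime s t n \<le> k_indep n (pullback (skip v) n E) s"
      by (rule kprime_props(2)[OF t pullback_graph cf])
    also have "\<dots> = card {T \<in> ?I. T \<subseteq> skip v ` {0..<n}}" by (rule pullback_indep[OF inj img])
    also have "{T \<in> ?I. T \<subseteq> skip v ` {0..<n}} = {T \<in> ?I. v \<notin> T}"
      unfolding im by (auto simp: indeps_def)
    finally show ?thesis .
  qed
  have "Suc n * kprime s t n = (\<Sum>v\<in>?V. kprime s t n)" by simp
  also have "\<dots> \<le> (\<Sum>v\<in>?V. card {T \<in> ?I. v \<notin> T})" by (intro sum_mono each)
  also have "\<dots> = card ?I * (card ?V - s)"
    by (rule double_count) (auto simp: indeps_def finite_indeps)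
  finally have ineq: "Suc n * kprime s t n \<le> kprime s t (Suc n) * (Suc n - s)"
    using E(3) by (simp add: k_indep_eq)
  have bin: "(Suc n - s) * (Suc n choose s) = Suc n * (n choose s)"
    using binomial_absorb_comp[of "Suc n" s] by simp
  have "Suc n * kprime s t n * (Suc n choose s) \<le> kprime s t (Suc n) * (Suc n - s) * (Suc n choose s)"
    by (rule mult_right_mono[OF ineq]) simp
  then have "Suc n * (kprime s t n * (Suc n choose s)) \<le> kprime s t (Suc n) * (Suc n - s) * (Suc n choose s)"
    by (simp only: mult.assoc)
  also have "\<dots> = Suc n * (kprime s t (Suc n) * (n choose s))"
  proof -
    have "kprime s t (Suc n) * (Suc n - s) * (Suc n choose s) = kprime s t (Suc n) * ((Suc n - s) * (Suc n choose s))"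
      by (simp only: mult.assoc)
    also have "\<dots> = kprime s t (Suc n) * (Suc n * (n choose s))" by (simp only: bin)
    also have "\<dots> = Suc n * (kprime s t (Suc n) * (n choose s))" by (simp only: mult.left_commute)
    finally show ?thesis .
  qed
  finally show ?thesis by (simp only: mult_le_cancel1)
qed


definition ratio :: "nat \<Rightarrow> nat \<Rightarrow> nat \<Rightarrow> real" where
  "ratio s t n = real (kprime s t n) / real (n choose s)"

lemma ratio_le1: "t \<ge> 2 \<Longrightarrow> ratio s t n \<le> 1"
  unfolding ratio_def using kprime_le[of t s n]
  by (cases "n choose s = 0") (auto simp: divide_le_eq_1)

lemma ratio_nonneg: "ratio s t n \<ge> 0"
  unfolding ratio_def by simp

lemma ratio_mono:
  assumes t: "t \<ge> 2" and sn: "s \<le> n"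
  shows "ratio s t n \<le> ratio s t (Suc n)"
proof -
  have p1: "real (n choose s) > 0" using sn by simp
  have p2: "real (Suc n choose s) > 0" using sn by simp
  have "real (kprime s t n) * real (Suc n choose s) \<le> real (kprime s t (Suc n)) * real (n choose s)"
    using kprime_mono_n[OF t, of s n] by (metis of_nat_le_iff of_nat_mult)
  then show ?thesis unfolding ratio_def using p1 p2
    by (simp add: divide_simps mult.commute)
qed

lemma ratio_facts:
  assumes t: "t \<ge> 2"
  shows "ratio s t \<longlonglongrightarrow> g s t" and "\<And>n. s \<le> n \<Longrightarrow> ratio s t n \<le> g s t"
proof -
  let ?X = "\<lambda>n. ratio s t (n + s)"
  have inc: "incseq ?X"
    by (rule incseq_SucI) (simp add: ratio_mono[OF t])
  have bdd: "bdd_above (range ?X)"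
    by (rule bdd_aboveI[of _ 1]) (use ratio_le1[OF t] in auto)
  have lim1: "?X \<longlonglongrightarrow> (SUP i. ?X i)" by (rule LIMSEQ_incseq_SUP[OF bdd inc])
  then have lim2: "ratio s t \<longlonglongrightarrow> (SUP i. ?X i)" by (rule LIMSEQ_offset)
  then have geq: "g s t = (SUP i. ?X i)" unfolding g_def ratio_def[abs_def] by (rule limI)
  show "ratio s t \<longlonglongrightarrow> g s t" using lim2 geq by simp
  fix n assume "s \<le> n"
  then have "ratio s t n = ?X (n - s)" by simp
  also have "\<dots> \<le> (SUP i. ?X i)" by (rule incseq_le[OF inc lim1])
  finally show "ratio s t n \<le> g s t" using geq by simp
qed

lemma g_nonneg: "t \<ge> 2 \<Longrightarrow> g s t \<ge> 0"
  using ratio_facts(2)[of t s s] ratio_nonneg[of s t s] by linarith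

lemma kprime_le_g:
  assumes t: "t \<ge> 2"
  shows "real (kprime s t n) \<le> g s t * real (n choose s)"
proof (cases "s \<le> n")
  case True
  have pos: "real (n choose s) > 0" using True by simp
  have "ratio s t n \<le> g s t" using ratio_facts(2)[OF t True] .
  then show ?thesis using pos unfolding ratio_def by (simp add: divide_le_eq)
next
  case False
  then have "n choose s = 0" by simp
  then have "kprime s t n = 0" using kprime_le[OF t, of s n] by linarith
  then show ?thesis using \<open>n choose s = 0\<close> by (simp del: binomial_eq_0_iff)
qed


definition join :: "nat \<Rightarrow> nat \<Rightarrow> nat set set \<Rightarrow> nat set set" where
  "join n m E = E \<union> {{x, y} | x y. x < n \<and> n \<le> y \<and> y < n + m}"

lemma join_graph: assumes "E \<in> graphs n" shows "join n m E \<in> graphs (n + m)"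
proof -
  have "\<And>e. e \<in> E \<Longrightarrow> e \<subseteq> {0..<n} \<and> card e = 2" using assms by (auto simp: graphs_def)
  then have "\<And>e. e \<in> E \<Longrightarrow> e \<subseteq> {0..<n + m} \<and> card e = 2" by fastforce
  then show ?thesis unfolding join_def graphs_def by (auto simp: card_insert_if)
qed

lemma join_edge_low:
  assumes "E \<in> graphs n" "x < n" "y < n"
  shows "{x, y} \<in> join n m E \<longleftrightarrow> {x, y} \<in> E"
proof
  assume "{x, y} \<in> join n m E"
  then show "{x, y} \<in> E" using assms(2,3) unfolding join_def
    by (auto simp: doubleton_eq_iff)
qed (auto simp: join_def)

lemma join_edge_high:
  assumes "E \<in> graphs n" "n \<le> x" "n \<le> y"
  shows "{x, y} \<notin> join n m E"
proof
  assume "{x, y} \<in> join n m E"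
  then consider "{x, y} \<in> E" | a b where "{x, y} = {a, b}" "a < n" "n \<le> b" unfolding join_def by blast
  then show False
  proof cases
    case 1
    then have "{x, y} \<subseteq> {0..<n}" using assms(1) by (auto simp: graphs_def)
    then show False using assms(2) by auto
  next
    case 2
    then show False using assms(2,3) by (auto simp: doubleton_eq_iff)
  qed
qed

lemma join_edge_cross:
  assumes "x < n" "n \<le> y" "y < n + m"
  shows "{x, y} \<in> join n m E" "{y, x} \<in> join n m E"
  using assms unfolding join_def by (auto simp: insert_commute)

lemma join_clique:
  assumes E: "E \<in> graphs n" and cf: "k_clique n E t = 0"
  shows "k_clique (n + m) (join n m E) (Suc t) = 0"
proof -
  let ?C = "{S. S \<subseteq> {0..<n + m} \<and> card S = Suc t \<and> (\<forall>x\<in>S. \<forall>y\<in>S. x \<noteq> y \<longrightarrow> {x, y} \<in> join n m E)}"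
  let ?D = "{S. S \<subseteq> {0..<n} \<and> card S = t \<and> (\<forall>x\<in>S. \<forall>y\<in>S. x \<noteq> y \<longrightarrow> {x, y} \<in> E)}"
  have finD: "finite ?D" by (rule finite_subset[of _ "Pow {0..<n}"]) auto
  have D0: "?D = {}" using cf finD unfolding k_clique_def by simp
  have "?C = {}"
  proof (rule ccontr)
    assume "?C \<noteq> {}"
    then obtain S where S: "S \<subseteq> {0..<n + m}" "card S = Suc t"
      "\<forall>x\<in>S. \<forall>y\<in>S. x \<noteq> y \<longrightarrow> {x, y} \<in> join n m E" by blast
    have finS: "finite S" using S(1) finite_subset by blast
    let ?A = "S \<inter> {0..<n}" and ?B = "S - {0..<n}"
    have B1: "card ?B \<le> 1"
    proof (rule ccontr)
      assume "\<not> card ?B \<le> 1"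
      then have "card ?B \<ge> 2" by simp
      then obtain x y where "x \<in> ?B" "y \<in> ?B" "x \<noteq> y" by (rule two_elems)
      then show False using S(3) join_edge_high[OF E, of x y m] by auto
    qed
    have "card S = card ?A + card ?B"
      using card_Int_Diff[OF finS] by blast
    then have "card ?A \<ge> t" using S(2) B1 by linarith
    then obtain A' where A': "A' \<subseteq> ?A" "card A' = t"
      using obtain_subset_with_card_n by metis
    have "A' \<in> ?D"
    proof -
      have "\<forall>x\<in>A'. \<forall>y\<in>A'. x \<noteq> y \<longrightarrow> {x, y} \<in> E"
      proof (intro ballI impI)
        fix x y assume "x \<in> A'" "y \<in> A'" "x \<noteq> y"
        then have "{x, y} \<in> join n m E" "x < n" "y < n" using S(3) A'(1) by auto
        then show "{x, y} \<in> E" using join_edge_low[OF E] by blast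
      qed
      then show ?thesis using A' by auto
    qed
    then show False using D0 by blast
  qed
  then show ?thesis unfolding k_clique_def by simp
qed

lemma join_indep:
  assumes E: "E \<in> graphs n"
  shows "k_indep (n + m) (join n m E) s \<le> k_indep n E s + (m choose s)"
proof -
  let ?H = "{T. T \<subseteq> {n..<n + m} \<and> card T = s}"
  have sub: "indeps (n + m) (join n m E) s \<subseteq> indeps n E s \<union> ?H"
  proof
    fix T assume T: "T \<in> indeps (n + m) (join n m E) s"
    show "T \<in> indeps n E s \<union> ?H"
    proof (cases "T \<subseteq> {n..<n + m}")
      case True
      then show ?thesis using T by (auto simp: indeps_def)
    next
      case False
      then obtain x where "x \<in> T" "x \<notin> {n..<n + m}" by blast
      moreover have "T \<subseteq> {0..<n + m}" using T by (auto simp: indeps_def)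
      ultimately have x: "x \<in> T" "x < n" by auto
      have low: "T \<subseteq> {0..<n}"
      proof
        fix y assume y: "y \<in> T"
        show "y \<in> {0..<n}"
        proof (rule ccontr)
          assume "y \<notin> {0..<n}"
          then have "n \<le> y" "y < n + m" "x \<noteq> y" using y T x by (auto simp: indeps_def)
          then have "{x, y} \<in> join n m E" using join_edge_cross x by blast
          then show False using T x y \<open>x \<noteq> y\<close> by (auto simp: indeps_def)
        qed
      qed
      have "\<forall>a\<in>T. \<forall>b\<in>T. a \<noteq> b \<longrightarrow> {a, b} \<notin> E"
        using T by (auto simp: indeps_def join_def)
      then show ?thesis using low T by (auto simp: indeps_def)
    qed
  qed
  have finH: "finite ?H" by (rule finite_subset[of _ "Pow {n..<n+m}"]) auto
  have "k_indep (n + m) (join n m E) s \<le> card (indeps n E s \<union> ?H)"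
    unfolding k_indep_eq by (rule card_mono[OF _ sub]) (simp add: finite_indeps finH)
  also have "\<dots> \<le> card (indeps n E s) + card ?H" by (rule card_Un_le)
  also have "card ?H = m choose s" using n_subsets[of "{n..<n + m}" s] by simp
  finally show ?thesis by (simp add: k_indep_eq)
qed

lemma kprime_join:
  assumes t: "t \<ge> 2"
  shows "kprime s (Suc t) (n + m) \<le> kprime s t n + (m choose s)"
proof -
  obtain E where E: "E \<in> graphs n" "k_clique n E t = 0" "kprime s t n = k_indep n E s"
    using kprime_props(1)[OF t] by blast
  have "kprime s (Suc t) (n + m) \<le> k_indep (n + m) (join n m E) s"
    using t by (intro kprime_props(2) join_graph join_clique E) auto
  also have "\<dots> \<le> kprime s t n + (m choose s)" using join_indep[OF E(1)] E(3) by simp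
  finally show ?thesis .
qed


lemma binom_ratio:
  assumes "n \<le> k"
  shows "real (n choose s) * real k ^ s \<le> real (k choose s) * real n ^ s"
proof (induction s)
  case 0
  then show ?case by simp
next
  case (Suc s)
  have absn: "real (Suc s) * real (n choose Suc s) = real (n - s) * real (n choose s)"
    using binomial_absorption[of s n] binomial_absorb_comp[of n s] by (metis of_nat_mult)
  have absk: "real (Suc s) * real (k choose Suc s) = real (k - s) * real (k choose s)"
    using binomial_absorption[of s k] binomial_absorb_comp[of k s] by (metis of_nat_mult)
  have "real (Suc s) * (real (n choose Suc s) * real k ^ Suc s) \<le> real (Suc s) * (real (k choose Suc s) * real n ^ Suc s)"
  proof (cases "n \<le> s")
    case True
    then have "real (n - s) = 0" by simp
    then have "real (Suc s) * (real (n choose Suc s) * real k ^ Suc s) = 0" using absn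
      by (metis mult.assoc mult_zero_left)
    moreover have "0 \<le> real (Suc s) * (real (k choose Suc s) * real n ^ Suc s)" by simp
    ultimately show ?thesis by linarith
  next
    case False
    then have ns: "real (n - s) = real n - real s" "real (k - s) = real k - real s" using assms by auto
    have c1: "(real n - real s) * real k \<le> (real k - real s) * real n"
      using assms mult_right_mono[of "real n" "real k" "real s"] by (simp add: algebra_simps)
    have nn: "0 \<le> (real n - real s) * real k" using False by simp
    have "real (Suc s) * (real (n choose Suc s) * real k ^ Suc s)
        = (real (Suc s) * real (n choose Suc s)) * (real k * real k ^ s)"
      by (simp only: power_Suc ac_simps)
    also have "\<dots> = (real (n - s) * real (n choose s)) * (real k * real k ^ s)" by (simp only: absn)
    also have "\<dots> = ((real n - real s) * real k) * (real (n choose s) * real k ^ s)"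
      by (simp only: ns ac_simps)
    also have "\<dots> \<le> ((real n - real s) * real k) * (real (k choose s) * real n ^ s)"
      by (rule mult_left_mono[OF Suc.IH nn])
    also have "\<dots> \<le> ((real k - real s) * real n) * (real (k choose s) * real n ^ s)"
      by (rule mult_right_mono[OF c1]) simp
    also have "\<dots> = (real (k - s) * real (k choose s)) * (real n * real n ^ s)"
      by (simp only: ns ac_simps)
    also have "\<dots> = (real (Suc s) * real (k choose Suc s)) * (real n * real n ^ s)" by (simp only: absk)
    also have "\<dots> = real (Suc s) * (real (k choose Suc s) * real n ^ Suc s)"
      by (simp only: power_Suc ac_simps)
    finally show ?thesis .
  qed
  then show ?case by (simp only: mult_le_cancel_left_pos of_nat_0_less_iff zero_less_Suc)
qed

lemma binom_ratio':
  assumes "n \<le> k" "0 < k"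
  shows "real (n choose s) \<le> real (k choose s) * (real n / real k) ^ s"
proof -
  have pos: "real k ^ s > 0" using assms by simp
  have "real (n choose s) = real (n choose s) * real k ^ s / real k ^ s" using pos by simp
  also have "\<dots> \<le> real (k choose s) * real n ^ s / real k ^ s"
    by (rule divide_right_mono[OF binom_ratio[OF assms(1)]]) simp
  also have "\<dots> = real (k choose s) * (real n / real k) ^ s" by (simp add: power_divide)
  finally show ?thesis .
qed

lemma g_step:
  assumes t: "t \<ge> 2" and s: "s \<ge> 2" and a0: "0 \<le> \<alpha>" and a1: "\<alpha> \<le> 1"
  shows "g s (Suc t) \<le> g s t * \<alpha> ^ s + (1 - \<alpha>) ^ s"
proof -
  define Y where "Y = (\<lambda>k::nat. g s t * \<alpha> ^ s + (1 - \<alpha> + 1 / real k) ^ s)"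
  have limY: "Y \<longlonglongrightarrow> g s t * \<alpha> ^ s + (1 - \<alpha> + 0) ^ s"
    unfolding Y_def by (intro tendsto_intros)
  have limX: "ratio s (Suc t) \<longlonglongrightarrow> g s (Suc t)" using ratio_facts(1)[of "Suc t" s] t by simp
  have gt0: "g s t \<ge> 0" by (rule g_nonneg[OF t])
  have le: "ratio s (Suc t) k \<le> Y k" if k: "k \<ge> s" for k
  proof -
    have kpos: "k > 0" using k s by simp
    have Cpos: "real (k choose s) > 0" using k by simp
    define n where "n = nat \<lfloor>\<alpha> * real k\<rfloor>"
    have fl0: "0 \<le> \<lfloor>\<alpha> * real k\<rfloor>" using a0 by simp
    have rn: "real n = of_int \<lfloor>\<alpha> * real k\<rfloor>" unfolding n_def using fl0 by simp
    have n_le_ak: "real n \<le> \<alpha> * real k" using rn by linarith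
    have n_gt: "real n > \<alpha> * real k - 1" using rn by linarith
    have "\<alpha> * real k \<le> 1 * real k" using a1 by (intro mult_right_mono) auto
    then have nk: "n \<le> k" using n_le_ak by linarith
    define m where "m = k - n"
    have nm: "n + m = k" using nk unfolding m_def by simp
    have rm: "real m = real k - real n" using nk unfolding m_def by simp
    have "real (kprime s (Suc t) k) \<le> real (kprime s t n) + real (m choose s)"
      using kprime_join[OF t, of s n m] nm by (metis of_nat_add of_nat_le_iff)
    also have "\<dots> \<le> g s t * real (n choose s) + real (m choose s)"
      using kprime_le_g[OF t, of s n] by simp
    also have "\<dots> \<le> g s t * (real (k choose s) * (real n / real k) ^ s) + real (k choose s) * (real m / real k) ^ s"
      using binom_ratio'[OF nk kpos, of s] binom_ratio'[of m k s] kpos gt0 unfolding m_def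
      by (intro add_mono mult_left_mono) auto
    finally have A: "real (kprime s (Suc t) k) \<le> real (k choose s) * (g s t * (real n / real k) ^ s + (real m / real k) ^ s)"
      by (simp add: algebra_simps)
    have r1: "real n / real k \<le> \<alpha>" using n_le_ak kpos by (simp add: divide_le_eq mult.commute)
    have r2: "real m / real k \<le> 1 - \<alpha> + 1 / real k"
    proof -
      have "real m \<le> real k * (1 - \<alpha>) + 1" using rm n_gt by (simp add: algebra_simps)
      then have "real m / real k \<le> (real k * (1 - \<alpha>) + 1) / real k"
        by (rule divide_right_mono) simp
      also have "\<dots> = 1 - \<alpha> + 1 / real k" using kpos by (simp add: field_simps)
      finally show ?thesis .
    qed
    have B: "g s t * (real n / real k) ^ s + (real m / real k) ^ s \<le> Y k"
      unfolding Y_def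
      by (intro add_mono mult_left_mono power_mono r1 r2 gt0) auto
    have "ratio s (Suc t) k \<le> g s t * (real n / real k) ^ s + (real m / real k) ^ s"
      unfolding ratio_def using A Cpos by (simp add: divide_le_eq mult.commute)
    then show ?thesis using B by linarith
  qed
  have "g s (Suc t) \<le> g s t * \<alpha> ^ s + (1 - \<alpha> + 0) ^ s"
    by (rule LIMSEQ_le[OF limX limY]) (use le in auto)
  then show ?thesis by simp
qed


lemma main_bound:
  fixes s t0 :: nat
  assumes s: "s \<ge> 2" and t0: "t0 \<ge> 2"
  shows "g s (t0 + d) \<le> (real d + g s t0 powr (1 / (1 - real s))) powr (1 - real s)"
proof (induction d)
  let ?p = "1 - real s"
  have p0: "?p \<noteq> 0" using s by simp
  case 0
  have gn: "g s t0 \<ge> 0" using g_nonneg[OF t0] .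
  show ?case
  proof (cases "g s t0 = 0")
    case True
    then show ?thesis by simp
  next
    case False
    then have "g s t0 > 0" using gn by simp
    then have "(g s t0 powr (1 / ?p)) powr ?p = g s t0"
      using p0 by (simp add: powr_powr)
    then show ?thesis by simp
  qed
next
  let ?p = "1 - real s"
  case (Suc d)
  define c where "c = g s t0 powr (1 / ?p)"
  define u where "u = real d + c"
  have c0: "c \<ge> 0" unfolding c_def by simp
  have u0: "u \<ge> 0" unfolding u_def using c0 by simp
  have IH: "g s (t0 + d) \<le> u powr ?p" using Suc.IH unfolding u_def c_def .
  define \<alpha> where "\<alpha> = u / (u + 1)"
  have a0: "0 \<le> \<alpha>" "\<alpha> \<le> 1" unfolding \<alpha>_def using u0 by (auto simp: divide_le_eq)
  have one_minus: "1 - \<alpha> = 1 / (u + 1)" unfolding \<alpha>_def using u0 by (simp add: field_simps)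
  have t: "t0 + d \<ge> 2" using t0 by simp
  have gn: "g s (t0 + d) \<ge> 0" using g_nonneg[OF t] .
  have step: "g s (Suc (t0 + d)) \<le> g s (t0 + d) * \<alpha> ^ s + (1 - \<alpha>) ^ s"
    by (rule g_step[OF t s a0])
  have target: "(real (Suc d) + c) = u + 1" unfolding u_def by simp
  have "g s (t0 + d) * \<alpha> ^ s + (1 - \<alpha>) ^ s \<le> (u + 1) powr ?p"
  proof (cases "u = 0")
    case True
    then have "\<alpha> = 0" unfolding \<alpha>_def by simp
    then show ?thesis using True s by (simp add: power_0_left)
  next
    case False
    then have upos: "u > 0" using u0 by simp
    have "g s (t0 + d) * \<alpha> ^ s \<le> u powr ?p * \<alpha> ^ s"
      by (rule mult_right_mono[OF IH]) (use a0 in simp)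
    also have "\<dots> = u powr ?p * u powr (real s) / (u + 1) ^ s"
      unfolding \<alpha>_def using upos by (simp add: power_divide powr_realpow)
    also have "u powr ?p * u powr (real s) = u"
      using upos by (simp add: powr_add[symmetric])
    finally have A: "g s (t0 + d) * \<alpha> ^ s \<le> u / (u + 1) ^ s" .
    have B: "(1 - \<alpha>) ^ s = 1 / (u + 1) ^ s" unfolding one_minus by (simp add: power_divide)
    have "g s (t0 + d) * \<alpha> ^ s + (1 - \<alpha>) ^ s \<le> (u + 1) / (u + 1) ^ s"
      using A B by (simp add: add_divide_distrib)
    also have "\<dots> = (u + 1) powr 1 / (u + 1) powr (real s)"
      using upos by (simp add: powr_realpow)
    also have "\<dots> = (u + 1) powr ?p" using upos by (simp add: powr_diff)
    finally show ?thesis .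
  qed
  then have "g s (Suc (t0 + d)) \<le> (real (Suc d) + c) powr ?p" using step unfolding target by linarith
  then show ?case unfolding c_def by simp
qed

lemma g_mono_t:
  assumes s: "s \<ge> 2" and t0: "t0 \<ge> 2"
  shows "g s (t0 + d) \<le> g s t0"
proof (induction d)
  case (Suc d)
  have t: "t0 + d \<ge> 2" using t0 by simp
  have "g s (Suc (t0 + d)) \<le> g s (t0 + d) * 1 ^ s + (1 - 1) ^ s"
    by (rule g_step[OF t s]) auto
  then show ?case using Suc.IH s by (simp add: power_0_left)
qed simp

theorem proposition5p1:
  fixes s t0 t :: nat
  assumes "s \<ge> 2" and "t0 \<ge> 2" and "t \<ge> t0"
  shows "g s t \<le> (real t - real t0 + g s t0 powr (1 / (1 - real s))) powr (1 - real s)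
       \<and> (g s t0 < (real t0 - 1) powr (1 - real s) \<longrightarrow> g s t < (real t - 1) powr (1 - real s))"
proof -
  let ?p = "1 - real s"
  obtain d where d: "t = t0 + d" using assms(3) le_Suc_ex by blast
  have rd: "real t - real t0 = real d" using d by simp
  have first: "g s t \<le> (real t - real t0 + g s t0 powr (1 / ?p)) powr ?p"
    using main_bound[OF assms(1,2), of d] unfolding rd d by simp
  have pneg: "?p < 0" using assms(1) by simp
  have t1: "real t - 1 > 0" using assms by simp
  have second: "g s t < (real t - 1) powr ?p" if hyp: "g s t0 < (real t0 - 1) powr ?p"
  proof (cases "g s t0 = 0")
    case True
    have "g s t \<le> 0" using g_mono_t[OF assms(1,2), of d] True unfolding d by simp
    moreover have "(real t - 1) powr ?p > 0" using t1 by simp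
    ultimately show ?thesis by linarith
  next
    case False
    then have gpos: "g s t0 > 0" using g_nonneg[OF assms(2), of s] by simp
    have ipneg: "1 / ?p < 0" using pneg by simp
    have t01: "real t0 - 1 > 0" using assms by simp
    have "((real t0 - 1) powr ?p) powr (1 / ?p) < g s t0 powr (1 / ?p)"
      by (rule powr_less_mono2_neg[OF ipneg gpos hyp])
    moreover have "((real t0 - 1) powr ?p) powr (1 / ?p) = real t0 - 1"
      using t01 pneg by (simp add: powr_powr)
    ultimately have c: "g s t0 powr (1 / ?p) > real t0 - 1" by simp
    have "(real t - real t0 + g s t0 powr (1 / ?p)) powr ?p < (real t - 1) powr ?p"
      by (rule powr_less_mono2_neg[OF pneg t1]) (use c in linarith)
    then show ?thesis using first by linarith
  qed
  show ?thesis using first second by blast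
qed

end
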